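(* Let $n\ge 1$, let $L\subseteq\mathbb Z^n$ be a lattice, and let $(\cdot,\cdot)$ be an inner product on $\mathbb R^n$ for which the canonical basis $\vec e_1,\dots,\vec e_n$ is orthogonal (not necessarily orthonormal). Assume that $(L,(\cdot,\cdot))$ is a zonotopal lattice. Then a vector $\vec v\in L$ is an elementary vector of $L$ if and only if it is a strict Voronoi vector of $L$ (with respect to $(\cdot,\cdot)$).
   Context: A lattice $L\subseteq\mathbb Z^n$ is the $\mathbb Z$-span of finitely many linearly independent vectors of $\mathbb Z^n$. The support of $\vec v\in\mathbb R^n$ is $\underline{\vec v}=\{i: v_i\neq 0\}$. A vector $\vec u\in L$ is elementary if $\vec u\in\{-1,0,+1\}^n\setminus\{\vec 0\}$ and $\vec u$ has minimal support among all vectors of $L\setminus\{\vec 0\}$ (i.e. no nonzero vector of $L$ has support strictly contained in $\underline{\vec u}$). The pair $(L,(\cdot,\cdot))$ is a zonotopal lattice if for every $\vec v\in L\setminus\{\vec 0\}$ there is an elementary vector $\vec u\in L$ with $\underline{\vec u}\subseteq\underline{\vec v}$. A vector $\vec v\in L\setminus\{\vec 0\}$ is a strict Voronoi vector if $\pm\vec v$ are the only vectors of minimal norm $(\vec w,\vec w)$ among all $\vec w$ in the coset $\vec v+2L$. *)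

theory Defs
  imports "HOL-Analysis.Analysis"
begin

text \<open>Integer vectors in Z^n are modelled as int^'n; the dimension n = CARD('n) \<ge> 1.\<close>

definition rvec :: "int^'n \<Rightarrow> real^'n" where
  "rvec v = (\<chi> i. real_of_int (v $ i))"

definition is_lattice :: "(int^'n) set \<Rightarrow> bool" where
  "is_lattice L \<longleftrightarrow> (\<exists>S. finite S \<and> inj_on rvec S \<and> independent (rvec ` S) \<and>
      L = {(\<Sum>b\<in>S. c b *s b) | c :: int^'n \<Rightarrow> int. True})"

definition is_inner_product :: "(real^'n \<Rightarrow> real^'n \<Rightarrow> real) \<Rightarrow> bool" where
  "is_inner_product B \<longleftrightarrow> bilinear B \<and> (\<forall>x y. B x y = B y x) \<and> (\<forall>x. x \<noteq> 0 \<longrightarrow> B x x > 0)"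

definition canonical_basis_orthogonal :: "(real^'n \<Rightarrow> real^'n \<Rightarrow> real) \<Rightarrow> bool" where
  "canonical_basis_orthogonal B \<longleftrightarrow> (\<forall>i j. i \<noteq> j \<longrightarrow> B (axis i 1) (axis j 1) = 0)"

definition supp :: "int^'n \<Rightarrow> 'n set" where
  "supp v = {i. v $ i \<noteq> 0}"

definition elementary :: "(int^'n) set \<Rightarrow> int^'n \<Rightarrow> bool" where
  "elementary L u \<longleftrightarrow> u \<in> L \<and> u \<noteq> 0 \<and> (\<forall>i. u $ i \<in> {-1, 0, 1}) \<and>
      \<not> (\<exists>w\<in>L. w \<noteq> 0 \<and> supp w \<subset> supp u)"

definition zonotopal :: "(int^'n) set \<Rightarrow> bool" where
  "zonotopal L \<longleftrightarrow> (\<forall>v\<in>L. v \<noteq> 0 \<longrightarrow> (\<exists>u. elementary L u \<and> supp u \<subseteq> supp v))"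

definition strict_voronoi :: "(int^'n) set \<Rightarrow> (real^'n \<Rightarrow> real^'n \<Rightarrow> real) \<Rightarrow> int^'n \<Rightarrow> bool" where
  "strict_voronoi L B v \<longleftrightarrow> v \<in> L \<and> v \<noteq> 0 \<and>
      (\<forall>x\<in>L. let w = v + 2 *s x in
         w \<noteq> v \<and> w \<noteq> - v \<longrightarrow> B (rvec w) (rvec w) > B (rvec v) (rvec v))"

end

theory Submission imports Defs begin

lemma normB:
  assumes ip: "is_inner_product B" and ob: "canonical_basis_orthogonal B"
  shows "B x x = (\<Sum>i\<in>UNIV. (x$i)^2 * B (axis i 1) (axis i 1))"
proof -
  have bl: "bilinear B" using ip unfolding is_inner_product_def by blast
  have xe: "x = (\<Sum>i\<in>UNIV. (x$i) *\<^sub>R axis i 1)"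
    using basis_expansion[of x] by (simp add: scalar_mult_eq_scaleR)
  have "B x x = B (\<Sum>i\<in>UNIV. (x$i) *\<^sub>R axis i 1) (\<Sum>i\<in>UNIV. (x$i) *\<^sub>R axis i 1)"
    using xe by simp
  also have "\<dots> = (\<Sum>(i,j)\<in>UNIV\<times>UNIV. B ((x$i) *\<^sub>R axis i 1) ((x$j) *\<^sub>R axis j 1))"
    by (rule bilinear_sum[OF bl])
  also have "\<dots> = (\<Sum>i\<in>UNIV. \<Sum>j\<in>UNIV. B ((x$i) *\<^sub>R axis i 1) ((x$j) *\<^sub>R axis j 1))"
    by (simp add: sum.cartesian_product)
  also have "\<dots> = (\<Sum>i\<in>UNIV. \<Sum>j\<in>UNIV. if j = i then (x$i)^2 * B (axis i 1) (axis i 1) else 0)"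
    apply (rule sum.cong, simp, rule sum.cong, simp)
    using ob unfolding canonical_basis_orthogonal_def
    by (auto simp: bilinear_lmul[OF bl] bilinear_rmul[OF bl] power2_eq_square)
  also have "\<dots> = (\<Sum>i\<in>UNIV. (x$i)^2 * B (axis i 1) (axis i 1))"
    by simp
  finally show ?thesis .
qed

lemma dpos:
  assumes ip: "is_inner_product B"
  shows "B (axis i 1) (axis i 1) > 0"
  proof - have "axis i (1::real) \<noteq> 0" by (simp add: axis_eq_0_iff) then show ?thesis using ip unfolding is_inner_product_def by blast qed

lemma normR:
  assumes "is_inner_product B" "canonical_basis_orthogonal B"
  shows "B (rvec w) (rvec w) = (\<Sum>i\<in>UNIV. (real_of_int (w$i))^2 * B (axis i 1) (axis i 1))"
  unfolding normB[OF assms, of "rvec w"] by (simp add: rvec_def)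

lemma lat_add:
  assumes "is_lattice L" "a \<in> L" "b \<in> L" shows "a + b \<in> L"
proof -
  from assms(1) obtain S where L: "L = {(\<Sum>b\<in>S. c b *s b) | c. True}"
    unfolding is_lattice_def by (elim exE conjE) (rule that)
  from assms(2) L obtain c where a: "a = (\<Sum>b\<in>S. c b *s b)" by blast
  from assms(3) L obtain d where b: "b = (\<Sum>b\<in>S. d b *s b)" by blast
  have "a + b = (\<Sum>x\<in>S. (c x + d x) *s x)"
    unfolding a b by (simp add: sum.distrib)
  then have "\<exists>c'. a + b = (\<Sum>x\<in>S. c' x *s x)" by (rule exI[where x="\<lambda>x. c x + d x"])
  then show ?thesis using L by simp
qed

lemma lat_smult:
  assumes "is_lattice L" "a \<in> L" shows "k *s a \<in> L"
proof -
  from assms(1) obtain S where L: "L = {(\<Sum>b\<in>S. c b *s b) | c. True}"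
    unfolding is_lattice_def by (elim exE conjE) (rule that)
  from assms(2) L obtain c where a: "a = (\<Sum>b\<in>S. c b *s b)" by blast
  have "k *s a = (\<Sum>x\<in>S. (k * c x) *s x)"
    unfolding a by (simp add: vec_eq_iff sum_distrib_left mult.assoc)
  then have "\<exists>c'. k *s a = (\<Sum>x\<in>S. c' x *s x)" by (rule exI[where x="\<lambda>x. k * c x"])
  then show ?thesis using L by simp
qed

lemma lat_neg: assumes "is_lattice L" "a \<in> L" shows "- a \<in> L"
  using lat_smult[OF assms, of "-1"] by (simp add: vector_sneg_minus1)

lemma lat_diff: assumes "is_lattice L" "a \<in> L" "b \<in> L" shows "a - b \<in> L"
  using lat_add[OF assms(1,2) lat_neg[OF assms(1,3)]] by simp


lemma int_sq_ge1: "(z::int) \<noteq> 0 \<Longrightarrow> 1 \<le> z^2"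
proof -
  assume "z \<noteq> 0"
  then have "0 < z^2" by simp
  then show ?thesis by linarith
qed

definition conf :: "int^'n \<Rightarrow> int^'n \<Rightarrow> bool" where
  "conf u v \<longleftrightarrow> (\<forall>i. (u$i > 0 \<longrightarrow> v$i > 0) \<and> (u$i < 0 \<longrightarrow> v$i < 0))"

lemma elem_neg: assumes "is_lattice L" "elementary L u" shows "elementary L (-u)"
proof -
  have "supp (-u) = supp u" by (simp add: supp_def)
  then show ?thesis using assms lat_neg[OF assms(1)] unfolding elementary_def
    by (auto simp: neg_equal_0_iff_equal)
qed

lemma conformal:
  assumes lat: "is_lattice L" and zon: "zonotopal L"
  shows "v \<in> L \<Longrightarrow> v \<noteq> 0 \<Longrightarrow> \<exists>u. elementary L u \<and> conf u v"
proof (induction "card (supp v)" arbitrary: v rule: less_induct)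
  case less
  obtain u where u: "elementary L u" "supp u \<subseteq> supp v"
    using zon less.prems unfolding zonotopal_def by blast
  have ent: "\<And>i. u$i \<in> {-1,0,1}" using u(1) unfolding elementary_def by blast
  have uv: "\<And>i. u$i \<noteq> 0 \<Longrightarrow> v$i \<noteq> 0" using u(2) unfolding supp_def by blast
  show ?case
  proof (cases "conf u v \<or> conf (-u) v")
    case True
    then show ?thesis using elem_neg[OF lat u(1)] u(1) by blast
  next
    case False
    define P where "P = {i. u$i \<noteq> 0 \<and> (u$i > 0 \<longleftrightarrow> v$i > 0)}"
    have "P \<noteq> {}"
    proof -
      from False obtain i where "(-u$i > 0 \<and> \<not> v$i > 0) \<or> (-u$i < 0 \<and> \<not> v$i < 0)"
        unfolding conf_def by auto
      moreover have "u$i \<noteq> 0 \<Longrightarrow> v$i \<noteq> 0" by (rule uv)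
      ultimately have "i \<in> P" unfolding P_def by auto
      then show ?thesis by blast
    qed
    from False obtain j where j: "(u$j > 0 \<and> \<not> v$j > 0) \<or> (u$j < 0 \<and> \<not> v$j < 0)"
      unfolding conf_def by auto
    have fP: "finite P" by simp
    define t where "t = Min ((\<lambda>i. \<bar>v$i\<bar>) ` P)"
    have "t \<in> (\<lambda>i. \<bar>v$i\<bar>) ` P" unfolding t_def using fP \<open>P \<noteq> {}\<close> by (intro Min_in) auto
    then obtain k where k: "k \<in> P" "t = \<bar>v$k\<bar>" by blast
    have tle: "\<And>i. i \<in> P \<Longrightarrow> t \<le> \<bar>v$i\<bar>" unfolding t_def using fP by (intro Min_le) auto
    have tpos: "t > 0" using k uv[of k] unfolding P_def by auto
    define w where "w = v - t *s u"
    have wL: "w \<in> L" unfolding w_def using lat less.prems(1) u(1) lat_diff lat_smult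
      unfolding elementary_def by blast
    have wi: "\<And>i. w$i = v$i - t * u$i" unfolding w_def by simp
    have wc: "\<And>i. (w$i > 0 \<longrightarrow> v$i > 0) \<and> (w$i < 0 \<longrightarrow> v$i < 0)"
    proof -
      fix i
      show "(w$i > 0 \<longrightarrow> v$i > 0) \<and> (w$i < 0 \<longrightarrow> v$i < 0)"
      proof (cases "i \<in> P")
        case True
        then have "t \<le> \<bar>v$i\<bar>" by (rule tle)
        moreover have "u$i \<noteq> 0 \<and> (u$i > 0 \<longleftrightarrow> v$i > 0)" using True unfolding P_def by simp
        moreover have "u$i = -1 \<or> u$i = 0 \<or> u$i = 1" using ent[of i] by simp
        ultimately have "(u$i = -1 \<and> w$i = v$i + t \<or> u$i = 1 \<and> w$i = v$i - t) \<and> v$i \<noteq> 0 \<and> (0 < u $ i) = (0 < v $ i)"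
          using wi[of i] uv[of i] by auto
        then show ?thesis using \<open>t \<le> \<bar>v$i\<bar>\<close> tpos by arith
      next
        case False
        then have nP: "\<not> (u$i \<noteq> 0 \<and> (u$i > 0 \<longleftrightarrow> v$i > 0))" unfolding P_def by simp
        have "u$i = -1 \<or> u$i = 0 \<or> u$i = 1" using ent[of i] by simp
        then have "(u$i = -1 \<and> w$i = v$i + t \<or> u$i = 1 \<and> w$i = v$i - t \<or> u$i = 0 \<and> w$i = v$i) \<and> (u$i \<noteq> 0 \<longrightarrow> v$i \<noteq> 0)"
          using wi[of i] uv[of i] by auto
        then show ?thesis using nP tpos by arith
      qed
    qed
    have wk: "w$k = 0" using k ent[of k] wi[of k] unfolding P_def by auto
    have wj: "w$j \<noteq> 0" using j ent[of j] wi[of j] tpos by auto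
    have "w \<noteq> 0" using wj by auto
    have sub: "supp w \<subset> supp v"
    proof -
      have "supp w \<subseteq> supp v" using wc unfolding supp_def
        by (auto simp: neq_iff)
      moreover have "k \<in> supp v" using k uv[of k] unfolding P_def supp_def by auto
      moreover have "k \<notin> supp w" using wk unfolding supp_def by auto
      ultimately show ?thesis by blast
    qed
    then have "card (supp w) < card (supp v)" by (intro psubset_card_mono) auto
    from less.hyps[OF this wL \<open>w \<noteq> 0\<close>] obtain u' where u': "elementary L u'" "conf u' w" by blast
    have "conf u' v" using u'(2) wc unfolding conf_def by fastforce
    then show ?thesis using u'(1) by blast
  qed
qed

theorem lemma2:
  fixes L :: "(int^'n) set" and B :: "real^'n \<Rightarrow> real^'n \<Rightarrow> real" and v :: "int^'n"
  assumes "is_lattice L"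
    and "is_inner_product B"
    and "canonical_basis_orthogonal B"
    and "zonotopal L"
    and "v \<in> L"
  shows "elementary L v \<longleftrightarrow> strict_voronoi L B v"
proof
  note N = normR[OF assms(2,3)]
  note dp = dpos[OF assms(2)]
  assume el: "elementary L v"
  have ent: "\<And>i. v$i \<in> {-1,0,1}" using el unfolding elementary_def by blast
  have "v \<noteq> 0" using el unfolding elementary_def by blast
  moreover have "B (rvec (v + 2 *s x)) (rvec (v + 2 *s x)) > B (rvec v) (rvec v)"
    if x: "x \<in> L" and ne: "v + 2 *s x \<noteq> v" "v + 2 *s x \<noteq> - v" for x
  proof -
    define w where "w = v + 2 *s x"
    have wi: "\<And>i. w$i = v$i + 2 * x$i" unfolding w_def by simp
    have ci: "(v$i)^2 \<le> (w$i)^2" for i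
    proof (cases "v$i = 0")
      case True then show ?thesis by simp
    next
      case False
      then have "v$i = 1 \<or> v$i = -1" using ent[of i] by auto
      then have "w$i \<noteq> 0" using wi[of i] by presburger
      then have "1 \<le> (w$i)^2" by (rule int_sq_ge1)
      then show ?thesis using \<open>v$i = 1 \<or> v$i = -1\<close> by auto
    qed
    have cr: "(real_of_int (v$i))^2 * B (axis i 1) (axis i 1) \<le> (real_of_int (w$i))^2 * B (axis i 1) (axis i 1)" for i
    proof -
      have "(real_of_int (v$i))^2 \<le> (real_of_int (w$i))^2"
        using ci[of i] by (metis of_int_le_iff of_int_power)
      then show ?thesis using dp[of i] by (intro mult_right_mono) auto
    qed
    show ?thesis
    proof (rule ccontr)
      assume "\<not> ?thesis"
      then have le: "B (rvec w) (rvec w) \<le> B (rvec v) (rvec v)" unfolding w_def by simp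
      have eq: "(w$i)^2 = (v$i)^2" for i
      proof (rule ccontr)
        assume "(w$i)^2 \<noteq> (v$i)^2"
        then have "(v$i)^2 < (w$i)^2" using ci[of i] by auto
        then have "(real_of_int (v$i))^2 < (real_of_int (w$i))^2"
          by (metis of_int_less_iff of_int_power)
        then have "(real_of_int (v$i))^2 * B (axis i 1) (axis i 1) < (real_of_int (w$i))^2 * B (axis i 1) (axis i 1)"
          using dp[of i] by (intro mult_strict_right_mono) auto
        then have "B (rvec v) (rvec v) < B (rvec w) (rvec w)"
          unfolding N by (intro sum_strict_mono_ex1) (auto intro: cr)
        then show False using le by simp
      qed
      have xc: "x$i = 0 \<or> x$i = - v$i" for i
      proof -
        have "v$i = 0 \<or> v$i = 1 \<or> v$i = -1" using ent[of i] by auto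
        moreover have "(w$i)^2 = (v$i)^2" by (rule eq)
        ultimately show ?thesis using wi[of i] by (auto simp: power2_eq_1_iff)
      qed
      have "x \<noteq> 0" using ne by auto
      have "supp x \<subseteq> supp v" using xc unfolding supp_def by force
      then have "supp x = supp v" using el x \<open>x \<noteq> 0\<close> unfolding elementary_def by blast
      then have "x = - v" using xc unfolding supp_def vec_eq_iff by force
      then have "v + 2 *s x = - v" by (simp add: vec_eq_iff)
      then show False using ne by blast
    qed
  qed
  ultimately show "strict_voronoi L B v" using assms(5) unfolding strict_voronoi_def Let_def by blast
next
  note N = normR[OF assms(2,3)]
  note dp = dpos[OF assms(2)]
  assume sv: "strict_voronoi L B v"
  have "v \<noteq> 0" using sv unfolding strict_voronoi_def by blast
  from conformal[OF assms(1,4,5) this] obtain u where u: "elementary L u" "conf u v" by blast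
  have ent: "\<And>i. u$i \<in> {-1,0,1}" using u(1) unfolding elementary_def by blast
  have mu: "- u \<in> L" using lat_neg[OF assms(1)] u(1) unfolding elementary_def by blast
  define w where "w = v + 2 *s (- u)"
  have wi: "\<And>i. w$i = v$i - 2 * u$i" unfolding w_def by simp
  have ci: "(w$i)^2 \<le> (v$i)^2" for i
  proof -
    have "u$i = 0 \<or> (u$i = 1 \<and> v$i \<ge> 1) \<or> (u$i = -1 \<and> v$i \<le> -1)"
    proof -
      have "(0 < u$i \<longrightarrow> 0 < v$i) \<and> (u$i < 0 \<longrightarrow> v$i < 0)" using u(2) unfolding conf_def by blast
      then show ?thesis using ent[of i] by auto
    qed
    moreover have "(w$i)^2 = (v$i)^2 - 4*(v$i)*(u$i) + 4*(u$i)^2"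
      by (simp add: wi power2_eq_square algebra_simps)
    ultimately show ?thesis by auto
  qed
  have "B (rvec w) (rvec w) \<le> B (rvec v) (rvec v)"
    unfolding N
  proof (intro sum_mono)
    fix i
    have "(real_of_int (w$i))^2 \<le> (real_of_int (v$i))^2"
      using ci[of i] by (metis of_int_le_iff of_int_power)
    then show "(real_of_int (w$i))^2 * B (axis i 1) (axis i 1) \<le> (real_of_int (v$i))^2 * B (axis i 1) (axis i 1)"
      using dp[of i] by (intro mult_right_mono) auto
  qed
  then have "w = v \<or> w = - v" using sv mu unfolding strict_voronoi_def Let_def w_def
    by force
  moreover have "w \<noteq> v"
  proof
    assume "w = v"
    then have "u = 0" unfolding w_def by (simp add: vec_eq_iff)
    then show False using u(1) unfolding elementary_def by blast
  qed
  ultimately have "w = - v" by blast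
  then have "u = v" unfolding w_def by (simp add: vec_eq_iff)
  then show "elementary L v" using u(1) by simp
qed

end
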